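(* Let $S\subseteq\mathbb{R}^m$ be a condensed space and let $I\subseteq\mathscr{C}(S)[x_1,\dots,x_n]$ be a condensed ideal. Then $I$ is finitely generated.
   Context: $S\subseteq\mathbb{R}^m$ carries the Euclidean subspace topology; $\mathscr{C}(S)$ is the ring of continuous complex-valued functions on $S$. A polynomial function on $S$ is the restriction to $S$ of a polynomial in the $m$ real coordinates with complex coefficients; $\mathscr{P}(S)$ is the ring of these. A real algebraic subset of $S$ is the common zero set in $S$ of finitely many elements of $\mathscr{P}(S)$. $S$ is condensed if every real algebraic subset $V\subseteq S$ with $V\neq S$ is nowhere dense in $S$. $\mathscr{R}(S)=\{f/g: f,g\in\mathscr{P}(S),\ g \text{ has no zero on } S\}$. An ideal $I\subseteq\mathscr{C}(S)[x_1,\dots,x_n]$ is condensed if it is generated by some elements of $\mathscr{R}(S)[x_1,\dots,x_n]$. *)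

theory Defs
  imports "HOL-Analysis.Analysis" "HOL-Algebra.Ideal" "HOL-Library.Poly_Mapping"
    "HOL-Library.Function_Algebras"
begin

text \<open>Points of S live in real^'m (m = CARD('m)).  Continuous functions on S are
  represented as functions real^'m => complex that vanish outside S, so that two
  representatives agree iff they agree on S.\<close>

definition polyfun :: "((('m::finite) \<Rightarrow>\<^sub>0 nat) \<Rightarrow>\<^sub>0 complex) \<Rightarrow> real^'m \<Rightarrow> complex" where
  "polyfun q x = (\<Sum>a\<in>Poly_Mapping.keys q. Poly_Mapping.lookup q a * (\<Prod>i\<in>UNIV. (complex_of_real (x $ i)) ^ Poly_Mapping.lookup a i))"

definition real_algebraic_subset :: "(real^'m::finite) set \<Rightarrow> (real^'m) set \<Rightarrow> bool" where
  "real_algebraic_subset S V \<longleftrightarrow>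
     (\<exists>F. finite F \<and> V = {x\<in>S. \<forall>q\<in>F. polyfun q x = 0})"

definition condensed :: "(real^'m::finite) set \<Rightarrow> bool" where
  "condensed S \<longleftrightarrow>
     (\<forall>V. real_algebraic_subset S V \<and> V \<noteq> S \<longrightarrow>
        (top_of_set S) interior_of ((top_of_set S) closure_of V) = {})"

definition cont_fun_on :: "(real^'m::finite) set \<Rightarrow> (real^'m \<Rightarrow> complex) \<Rightarrow> bool" where
  "cont_fun_on S f \<longleftrightarrow> continuous_on S f \<and> (\<forall>x. x \<notin> S \<longrightarrow> f x = 0)"

definition regular_fun_on :: "(real^'m::finite) set \<Rightarrow> (real^'m \<Rightarrow> complex) \<Rightarrow> bool" where
  "regular_fun_on S f \<longleftrightarrow>
     (\<exists>p q. (\<forall>x\<in>S. polyfun q x \<noteq> 0) \<and>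
            (\<forall>x. f x = (if x \<in> S then polyfun p x / polyfun q x else 0)))"

text \<open>Polynomials in the variables x_0,...,x_{n-1} with coefficients in C(S).\<close>
type_synonym 'm cpoly = "((nat \<Rightarrow>\<^sub>0 nat) \<Rightarrow>\<^sub>0 (real^'m \<Rightarrow> complex))"

definition CS_polys :: "(real^'m::finite) set \<Rightarrow> nat \<Rightarrow> 'm cpoly set" where
  "CS_polys S n = {P. (\<forall>\<alpha>\<in>Poly_Mapping.keys P. Poly_Mapping.keys \<alpha> \<subseteq> {..<n}) \<and> (\<forall>\<alpha>. cont_fun_on S (Poly_Mapping.lookup P \<alpha>))}"

definition CS_poly_ring :: "(real^'m::finite) set \<Rightarrow> nat \<Rightarrow> 'm cpoly ring" where
  "CS_poly_ring S n =
     \<lparr>carrier = CS_polys S n, monoid.mult = (\<lambda>P Q. P * Q),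
      one = Poly_Mapping.single 0 (\<lambda>x. if x \<in> S then 1 else 0),
      zero = 0, add = (\<lambda>P Q. P + Q)\<rparr>"

definition RS_polys :: "(real^'m::finite) set \<Rightarrow> nat \<Rightarrow> 'm cpoly set" where
  "RS_polys S n = {P \<in> CS_polys S n. \<forall>\<alpha>. regular_fun_on S (Poly_Mapping.lookup P \<alpha>)}"

definition condensed_ideal :: "(real^'m::finite) set \<Rightarrow> nat \<Rightarrow> 'm cpoly set \<Rightarrow> bool" where
  "condensed_ideal S n I \<longleftrightarrow>
     ideal I (CS_poly_ring S n) \<and> (\<exists>G \<subseteq> RS_polys S n. I = genideal (CS_poly_ring S n) G)"

end

theory Submission
  imports Defs "HOL-Computational_Algebra.Polynomial"
begin


definition sring :: "'a::comm_ring_1 set \<Rightarrow> bool" where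
  "sring A \<longleftrightarrow> 0 \<in> A \<and> 1 \<in> A \<and> (\<forall>x\<in>A. \<forall>y\<in>A. x + y \<in> A \<and> x * y \<in> A \<and> - x \<in> A)"

definition lin :: "'a::comm_ring_1 set \<Rightarrow> 'a set \<Rightarrow> 'a set" where
  "lin A F = {y. \<exists>F' c. finite F' \<and> F' \<subseteq> F \<and> (\<forall>f\<in>F'. c f \<in> A) \<and> y = (\<Sum>f\<in>F'. c f * f)}"

definition noeth :: "'a::comm_ring_1 set \<Rightarrow> bool" where
  "noeth A \<longleftrightarrow> (\<forall>G \<subseteq> A. \<exists>F \<subseteq> G. finite F \<and> G \<subseteq> lin A F)"

lemma sringD:
  assumes "sring A"
  shows "0 \<in> A" "1 \<in> A" "x \<in> A \<Longrightarrow> y \<in> A \<Longrightarrow> x + y \<in> A"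
    "x \<in> A \<Longrightarrow> y \<in> A \<Longrightarrow> x * y \<in> A" "x \<in> A \<Longrightarrow> - x \<in> A"
    "x \<in> A \<Longrightarrow> y \<in> A \<Longrightarrow> x - y \<in> A"
proof -
  have A: "0 \<in> A" "1 \<in> A" "\<And>x y. x \<in> A \<Longrightarrow> y \<in> A \<Longrightarrow> x + y \<in> A"
    "\<And>x y. x \<in> A \<Longrightarrow> y \<in> A \<Longrightarrow> x * y \<in> A" "\<And>x. x \<in> A \<Longrightarrow> - x \<in> A"
    using assms unfolding sring_def by blast+
  show "0 \<in> A" "1 \<in> A" by (fact A)+
  show "x \<in> A \<Longrightarrow> y \<in> A \<Longrightarrow> x + y \<in> A" "x \<in> A \<Longrightarrow> y \<in> A \<Longrightarrow> x * y \<in> A"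
    "x \<in> A \<Longrightarrow> - x \<in> A" by (fact A)+
  show "x \<in> A \<Longrightarrow> y \<in> A \<Longrightarrow> x - y \<in> A"
    using A(3)[of x "- y"] A(5)[of y] by simp
qed

lemma sring_sum:
  assumes "sring A" "\<And>i. i \<in> I \<Longrightarrow> f i \<in> A"
  shows "sum f I \<in> A"
  using assms(2)
proof (induction I rule: infinite_finite_induct)
  case (insert i I)
  then show ?case by (simp add: sringD(3)[OF assms(1)])
qed (simp_all add: sringD(1)[OF assms(1)])

lemma sring_power:
  assumes "sring A" "x \<in> A"
  shows "x ^ k \<in> A"
  by (induction k) (simp_all add: sringD(2,4)[OF assms(1)] assms(2))

lemma lin_0: "0 \<in> lin A F"
  unfolding lin_def by (rule CollectI, rule exI[of _ "{}"]) auto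

lemma lin_add:
  assumes "x \<in> lin A F" "y \<in> lin A F" "sring A"
  shows "x + y \<in> lin A F"
proof -
  obtain F1 c1 where 1: "finite F1" "F1 \<subseteq> F" "\<forall>f\<in>F1. c1 f \<in> A" "x = (\<Sum>f\<in>F1. c1 f * f)"
    using assms(1) unfolding lin_def by blast
  obtain F2 c2 where 2: "finite F2" "F2 \<subseteq> F" "\<forall>f\<in>F2. c2 f \<in> A" "y = (\<Sum>f\<in>F2. c2 f * f)"
    using assms(2) unfolding lin_def by blast
  define d1 where "d1 f = (if f \<in> F1 then c1 f else 0)" for f
  define d2 where "d2 f = (if f \<in> F2 then c2 f else 0)" for f
  have fin: "finite (F1 \<union> F2)" using 1(1) 2(1) by blast
  have "(\<Sum>f\<in>F1 \<union> F2. d1 f * f) = (\<Sum>f\<in>F1. d1 f * f)"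
    by (rule sum.mono_neutral_right[OF fin]) (auto simp: d1_def)
  also have "\<dots> = x" unfolding 1(4) d1_def by (rule sum.cong) auto
  finally have x: "x = (\<Sum>f\<in>F1 \<union> F2. d1 f * f)" by simp
  have "(\<Sum>f\<in>F1 \<union> F2. d2 f * f) = (\<Sum>f\<in>F2. d2 f * f)"
    by (rule sum.mono_neutral_right[OF fin]) (auto simp: d2_def)
  also have "\<dots> = y" unfolding 2(4) d2_def by (rule sum.cong) auto
  finally have y: "y = (\<Sum>f\<in>F1 \<union> F2. d2 f * f)" by simp
  have "x + y = (\<Sum>f\<in>F1 \<union> F2. (d1 f + d2 f) * f)"
    unfolding x y by (simp add: sum.distrib distrib_right)
  moreover have "\<forall>f\<in>F1 \<union> F2. d1 f + d2 f \<in> A"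
  proof
    fix f assume "f \<in> F1 \<union> F2"
    have "d1 f \<in> A" using 1(3) sringD(1)[OF assms(3)] unfolding d1_def by auto
    moreover have "d2 f \<in> A" using 2(3) sringD(1)[OF assms(3)] unfolding d2_def by auto
    ultimately show "d1 f + d2 f \<in> A" by (rule sringD(3)[OF assms(3)])
  qed
  ultimately show ?thesis unfolding lin_def using 1(2) 2(2) fin
    by (intro CollectI exI[of _ "F1 \<union> F2"] exI[of _ "\<lambda>f. d1 f + d2 f"]) auto
qed

lemma lin_mult:
  assumes "x \<in> lin A F" "a \<in> A" "sring A"
  shows "a * x \<in> lin A F"
proof -
  obtain F1 c1 where 1: "finite F1" "F1 \<subseteq> F" "\<forall>f\<in>F1. c1 f \<in> A" "x = (\<Sum>f\<in>F1. c1 f * f)"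
    using assms(1) unfolding lin_def by blast
  have "a * x = (\<Sum>f\<in>F1. (a * c1 f) * f)"
    unfolding 1(4) by (simp add: sum_distrib_left mult.assoc)
  moreover have "\<forall>f\<in>F1. a * c1 f \<in> A" using 1(3) sringD(4)[OF assms(3)] assms(2) by blast
  ultimately show ?thesis unfolding lin_def using 1(1,2)
    by (intro CollectI exI[of _ "F1"] exI[of _ "\<lambda>f. a * c1 f"]) auto
qed

lemma lin_neg:
  assumes "x \<in> lin A F" "sring A"
  shows "- x \<in> lin A F"
  using lin_mult[OF assms(1) _ assms(2), of "-1"] sringD[OF assms(2)] by auto

lemma lin_diff:
  assumes "x \<in> lin A F" "y \<in> lin A F" "sring A"
  shows "x - y \<in> lin A F"
  using lin_add[OF assms(1) lin_neg[OF assms(2,3)] assms(3)] by simp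

lemma lin_base:
  assumes "f \<in> F" "sring A"
  shows "f \<in> lin A F"
proof -
  have "f = (\<Sum>g\<in>{f}. 1 * g)" by simp
  then show ?thesis unfolding lin_def using assms sringD(2)[OF assms(2)]
    by (intro CollectI exI[of _ "{f}"] exI[of _ "\<lambda>_. 1"]) auto
qed

lemma lin_mono: "F \<subseteq> H \<Longrightarrow> lin A F \<subseteq> lin A H"
  unfolding lin_def by blast

lemma lin_closed:
  assumes "sring A" "0 \<in> M" "\<And>x y. x \<in> M \<Longrightarrow> y \<in> M \<Longrightarrow> x + y \<in> M"
    "\<And>a x. a \<in> A \<Longrightarrow> x \<in> F \<Longrightarrow> a * x \<in> M"
  shows "lin A F \<subseteq> M"
proof
  fix y assume "y \<in> lin A F"
  then obtain F1 c1 where 1: "finite F1" "F1 \<subseteq> F" "\<forall>f\<in>F1. c1 f \<in> A" "y = (\<Sum>f\<in>F1. c1 f * f)"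
    unfolding lin_def by blast
  have "(\<Sum>f\<in>F1. c1 f * f) \<in> M" using 1(1,2,3)
    by (induction F1 rule: finite_induct) (auto intro: assms)
  then show "y \<in> M" using 1 by simp
qed

lemma lin_trans:
  assumes "sring A" "G \<subseteq> lin A F"
  shows "lin A G \<subseteq> lin A F"
  using assms by (intro lin_closed) (auto intro: lin_0 lin_add lin_mult)

lemma lin_image:
  assumes "y \<in> lin A (h ` K)"
  shows "\<exists>K' d. finite K' \<and> K' \<subseteq> K \<and> (\<forall>k\<in>K'. d k \<in> A) \<and> y = (\<Sum>k\<in>K'. d k * h k)"
proof -
  obtain F1 c1 where 1: "finite F1" "F1 \<subseteq> h ` K" "\<forall>f\<in>F1. c1 f \<in> A" "y = (\<Sum>f\<in>F1. c1 f * f)"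
    using assms unfolding lin_def by blast
  define K' where "K' = inv_into K h ` F1"
  have hi: "h (inv_into K h x) = x" if "x \<in> F1" for x
    using that 1(2) by (intro f_inv_into_f) blast
  have inj: "inj_on h K'" unfolding K'_def
  proof (rule inj_onI)
    fix a b assume "a \<in> inv_into K h ` F1" "b \<in> inv_into K h ` F1" "h a = h b"
    then obtain x y where "x \<in> F1" "y \<in> F1" "a = inv_into K h x" "b = inv_into K h y" by blast
    then show "a = b" using hi \<open>h a = h b\<close> by simp
  qed
  have im: "h ` K' = F1" unfolding K'_def image_image using hi by simp
  have "y = (\<Sum>k\<in>K'. c1 (h k) * h k)"
    unfolding 1(4) im[symmetric] by (simp add: sum.reindex[OF inj])
  moreover have "K' \<subseteq> K" unfolding K'_def using 1(2) by (auto intro: inv_into_into)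
  moreover have "finite K'" unfolding K'_def using 1(1) by simp
  moreover have "\<forall>k\<in>K'. c1 (h k) \<in> A" using 1(3) im by blast
  ultimately show ?thesis
    by (intro exI[of _ K'] exI[of _ "\<lambda>k. c1 (h k)"]) blast
qed

lemma lin_sum:
  assumes "sring A" "\<And>i. i \<in> I \<Longrightarrow> g i \<in> lin A F"
  shows "sum g I \<in> lin A F"
  using assms(2)
  by (induction I rule: infinite_finite_induct) (auto intro: lin_0 lin_add assms(1))

lemma lin_self:
  assumes "y \<in> lin A F"
  shows "\<exists>F'. finite F' \<and> F' \<subseteq> F \<and> y \<in> lin A F'"
proof -
  obtain F1 c1 where 1: "finite F1" "F1 \<subseteq> F" "\<forall>f\<in>F1. c1 f \<in> A" "y = (\<Sum>f\<in>F1. c1 f * f)"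
    using assms unfolding lin_def by blast
  have "y \<in> lin A F1" unfolding lin_def using 1
    by (intro CollectI exI[of _ "F1"] exI[of _ c1]) auto
  then show ?thesis using 1 by blast
qed

definition PA :: "'a::comm_ring_1 set \<Rightarrow> 'a poly set" where
  "PA A = {p. \<forall>i. coeff p i \<in> A}"

lemma sring_PA:
  assumes "sring A"
  shows "sring (PA A)"
  unfolding sring_def PA_def
  by (auto simp: coeff_mult coeff_1 sringD[OF assms] intro!: sring_sum[OF assms])

lemma monom_PA:
  assumes "sring A" "a \<in> A"
  shows "monom a k \<in> PA A"
  using assms sringD(1)[OF assms(1)] unfolding PA_def by (auto simp: coeff_monom)

lemma hilbert:
  assumes sA: "sring A" and nA: "noeth A"
  shows "noeth (PA A)"
  unfolding noeth_def
proof (intro allI impI)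
  fix G assume G: "G \<subseteq> PA A"
  define P where "P = PA A"
  define J where "J = lin P G"
  have sP: "sring P" unfolding P_def by (rule sring_PA[OF sA])
  have JP: "J \<subseteq> P" unfolding J_def
  proof (rule lin_closed[OF sP])
    show "0 \<in> P" by (rule sringD(1)[OF sP])
    show "x + y \<in> P" if "x \<in> P" "y \<in> P" for x y using that by (rule sringD(3)[OF sP])
    show "a * x \<in> P" if "a \<in> P" "x \<in> G" for a x
      using that G unfolding P_def by (intro sringD(4)[OF sP[unfolded P_def]]) auto
  qed
  have key: "\<exists>H \<subseteq> J. finite H \<and> J \<subseteq> lin P H"
  proof (rule ccontr)
    assume nf: "\<not> ?thesis"
    have ex: "\<exists>g. g \<in> J \<and> g \<notin> lin P H" if "finite H" "H \<subseteq> J" for H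
      using nf that by blast
    define nxt where "nxt H = arg_min degree (\<lambda>g. g \<in> J \<and> g \<notin> lin P H)" for H
    define lst where "lst = rec_nat [] (\<lambda>_ l. l @ [nxt (set l)])"
    define f where "f k = nxt (set (lst k))" for k
    have lst_Suc: "lst (Suc k) = lst k @ [f k]" for k unfolding lst_def f_def by simp
    have lst_0: "lst 0 = []" unfolding lst_def by simp
    have setl: "set (lst k) = f ` {..<k}" for k
    proof (induction k)
      case (Suc k)
      show ?case unfolding lst_Suc set_append Suc lessThan_Suc by auto
    qed (simp add: lst_0)
    have fdef: "f k = arg_min degree (\<lambda>g. g \<in> J \<and> g \<notin> lin P (f ` {..<k}))" for k
    proof -
      have "f k = nxt (set (lst k))" by (rule f_def)
      also have "\<dots> = nxt (f ` {..<k})" by (simp only: setl)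
      finally show ?thesis unfolding nxt_def .
    qed
    have fk: "f k \<in> J \<and> f k \<notin> lin P (f ` {..<k}) \<and>
       (\<forall>g. g \<in> J \<and> g \<notin> lin P (f ` {..<k}) \<longrightarrow> degree (f k) \<le> degree g)" for k
    proof (induction k rule: less_induct)
      case (less k)
      have "f ` {..<k} \<subseteq> J"
      proof (rule image_subsetI)
        fix j assume "j \<in> {..<k}"
        then have "j < k" by simp
        from less[OF this] show "f j \<in> J" by (rule conjunct1)
      qed
      then obtain g where "g \<in> J \<and> g \<notin> lin P (f ` {..<k})" using ex[of "f ` {..<k}"] by blast
      note am = arg_min_nat_lemma[where P="\<lambda>g. g \<in> J \<and> g \<notin> lin P (f ` {..<k})" and m=degree, OF this]
      show ?case unfolding fdef[of k] using am by (elim conjE) (intro conjI; assumption)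
    qed
    have mono: "degree (f j) \<le> degree (f k)" if "j < k" for j k
    proof -
      have sub: "lin P (f ` {..<j}) \<subseteq> lin P (f ` {..<k})"
        using that by (intro lin_mono image_mono) auto
      have "f k \<notin> lin P (f ` {..<k})" using fk[of k] by (rule conjunct1[OF conjunct2])
      then have "f k \<notin> lin P (f ` {..<j})" using sub by blast
      moreover have "f k \<in> J" using fk[of k] by blast
      ultimately show ?thesis using fk[of j] by blast
    qed
    have nz: "f k \<noteq> 0" for k using fk[of k] lin_0 by metis
    have LA: "range (\<lambda>k. lead_coeff (f k)) \<subseteq> A"
    proof safe
      fix k
      have "f k \<in> P" using fk[of k] JP by blast
      then show "lead_coeff (f k) \<in> A" unfolding P_def PA_def by blast
    qed
    obtain F0 where F0: "F0 \<subseteq> range (\<lambda>k. lead_coeff (f k))" "finite F0"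
      "range (\<lambda>k. lead_coeff (f k)) \<subseteq> lin A F0"
      using nA[unfolded noeth_def, rule_format, OF LA] by blast
    obtain K where K: "K \<subseteq> UNIV" "finite K" "F0 = (\<lambda>k. lead_coeff (f k)) ` K"
      using finite_subset_image[OF F0(2,1)] by blast
    define N where "N = Suc (Max (insert 0 K))"
    have KN: "K \<subseteq> {..<N}" unfolding N_def using K(2)
      by (auto simp: less_Suc_eq_le)
    have "F0 \<subseteq> (\<lambda>k. lead_coeff (f k)) ` {..<N}" unfolding K(3) using KN by (rule image_mono)
    then have "lin A F0 \<subseteq> lin A ((\<lambda>k. lead_coeff (f k)) ` {..<N})" by (rule lin_mono)
    moreover have "lead_coeff (f N) \<in> lin A F0" using F0(3) by blast
    ultimately have "lead_coeff (f N) \<in> lin A ((\<lambda>k. lead_coeff (f k)) ` {..<N})" by blast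
    from lin_image[OF this] obtain K' d where K': "finite K'" "K' \<subseteq> {..<N}" "\<forall>k\<in>K'. d k \<in> A"
      "lead_coeff (f N) = (\<Sum>k\<in>K'. d k * lead_coeff (f k))"
      by blast
    define dN where "dN = degree (f N)"
    define g where "g = f N - (\<Sum>k\<in>K'. monom (d k) (dN - degree (f k)) * f k)"
    have sumJ: "(\<Sum>k\<in>K'. monom (d k) (dN - degree (f k)) * f k) \<in> lin P (f ` {..<N})"
      using K' by (intro lin_sum[OF sP] lin_mult[OF _ _ sP] lin_base[OF _ sP] monom_PA[OF sA,
            folded P_def]) auto
    have sumJ2: "(\<Sum>k\<in>K'. monom (d k) (dN - degree (f k)) * f k) \<in> J"
      unfolding J_def using K' fk
      by (intro lin_sum[OF sP] lin_mult[OF _ _ sP] monom_PA[OF sA, folded P_def]) (auto simp: J_def)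
    have gJ: "g \<in> J" unfolding g_def using fk[of N] sumJ2 unfolding J_def
      by (intro lin_diff[OF _ _ sP]) auto
    have gnot: "g \<notin> lin P (f ` {..<N})"
    proof
      assume "g \<in> lin P (f ` {..<N})"
      then have "g + (\<Sum>k\<in>K'. monom (d k) (dN - degree (f k)) * f k) \<in> lin P (f ` {..<N})"
        using sumJ by (intro lin_add[OF _ _ sP])
      then show False using fk[of N] unfolding g_def by simp
    qed
    have dk: "degree (f k) \<le> dN" if "k \<in> K'" for k
      using mono[of k N] that K'(2) unfolding dN_def by auto
    have cg: "coeff g i = 0" if "dN \<le> i" for i
    proof (cases "i = dN")
      case True
      have "coeff g i = lead_coeff (f N) - (\<Sum>k\<in>K'. d k * lead_coeff (f k))"
        unfolding g_def coeff_diff coeff_sum coeff_monom_mult True dN_def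
        using dk unfolding dN_def
        by (intro arg_cong2[where f="(-)"] refl sum.cong) (auto simp: not_less)
      then show ?thesis using K'(4) by simp
    next
      case False
      then have i: "i > dN" using that by auto
      have "coeff (f N) i = 0" using i unfolding dN_def by (simp add: coeff_eq_0)
      moreover have "coeff (monom (d k) (dN - degree (f k)) * f k) i = 0" if "k \<in> K'" for k
        using dk[OF that] i by (auto simp: coeff_monom_mult coeff_eq_0)
      ultimately show ?thesis unfolding g_def coeff_diff coeff_sum by simp
    qed
    have gnz: "g \<noteq> 0"
    proof
      assume "g = 0"
      with gnot have "0 \<notin> lin P (f ` {..<N})" by simp
      then show False using lin_0[of P "f ` {..<N}"] by (rule notE)
    qed
    have "degree g < dN"
    proof (rule ccontr)
      assume "\<not> degree g < dN"
      then have "dN \<le> degree g" by simp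
      then have "coeff g (degree g) = 0" by (rule cg)
      with gnz show False by simp
    qed
    moreover have "dN \<le> degree g"
    proof -
      have "\<forall>g. g \<in> J \<and> g \<notin> lin P (f ` {..<N}) \<longrightarrow> degree (f N) \<le> degree g"
        using fk[of N] by (rule conjunct2[OF conjunct2])
      then show ?thesis using gJ gnot unfolding dN_def by blast
    qed
    ultimately show False by simp
  qed
  then obtain H where H: "H \<subseteq> J" "finite H" "J \<subseteq> lin P H" by blast
  have "\<forall>h\<in>H. \<exists>Fh. finite Fh \<and> Fh \<subseteq> G \<and> h \<in> lin P Fh"
    using H(1) lin_self unfolding J_def by blast
  then obtain \<phi> where \<phi>: "\<And>h. h \<in> H \<Longrightarrow> finite (\<phi> h) \<and> \<phi> h \<subseteq> G \<and> h \<in> lin P (\<phi> h)"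
    by metis
  define F where "F = \<Union> (\<phi> ` H)"
  have "finite F" "F \<subseteq> G" unfolding F_def using \<phi> H(2) by auto
  moreover have "H \<subseteq> lin P F"
    using \<phi> lin_mono[of _ F P] unfolding F_def by blast
  then have "lin P H \<subseteq> lin P F" by (rule lin_trans[OF sP])
  then have "G \<subseteq> lin P F" using H(3) lin_base[OF _ sP] unfolding J_def by blast
  ultimately show "\<exists>F\<subseteq>G. finite F \<and> G \<subseteq> lin (PA A) F" unfolding P_def by blast
qed

definition adj :: "'a::comm_ring_1 set \<Rightarrow> 'a \<Rightarrow> 'a set" where
  "adj A z = (\<lambda>p. poly p z) ` PA A"

lemma sring_adj:
  assumes sA: "sring A"
  shows "sring (adj A z)"
proof -
  have sP: "sring (PA A)" by (rule sring_PA[OF sA])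
  show ?thesis unfolding sring_def adj_def
  proof (intro conjI ballI)
    show "0 \<in> (\<lambda>p. poly p z) ` PA A" using sringD(1)[OF sP] by (intro image_eqI[of _ _ 0]) auto
    show "1 \<in> (\<lambda>p. poly p z) ` PA A" using sringD(2)[OF sP] by (intro image_eqI[of _ _ 1]) auto
    fix x y assume x: "x \<in> (\<lambda>p. poly p z) ` PA A" and y: "y \<in> (\<lambda>p. poly p z) ` PA A"
    from x obtain p where p: "p \<in> PA A" "x = poly p z" by blast
    from y obtain q where q: "q \<in> PA A" "y = poly q z" by blast
    show "x + y \<in> (\<lambda>p. poly p z) ` PA A"
      using p q sringD(3)[OF sP p(1) q(1)] by (intro image_eqI[of _ _ "p + q"]) auto
    show "x * y \<in> (\<lambda>p. poly p z) ` PA A"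
      using p q sringD(4)[OF sP p(1) q(1)] by (intro image_eqI[of _ _ "p * q"]) auto
    show "- x \<in> (\<lambda>p. poly p z) ` PA A"
      using p sringD(5)[OF sP p(1)] by (intro image_eqI[of _ _ "- p"]) auto
  qed
qed

lemma adj_base:
  assumes sA: "sring A"
  shows "A \<subseteq> adj A z" "z \<in> adj A z"
proof -
  show "A \<subseteq> adj A z"
  proof
    fix a assume a: "a \<in> A"
    have "[:a:] \<in> PA A" unfolding PA_def using a sringD(1)[OF sA]
      by (auto simp: coeff_pCons split: nat.splits)
    then show "a \<in> adj A z" unfolding adj_def by (intro image_eqI[of _ _ "[:a:]"]) auto
  qed
  have "[:0, 1:] \<in> PA A" unfolding PA_def using sringD(1,2)[OF sA]
    by (auto simp: coeff_pCons split: nat.splits)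
  then show "z \<in> adj A z" unfolding adj_def by (intro image_eqI[of _ _ "[:0, 1:]"]) auto
qed

definition closedM :: "'a::comm_ring_1 set \<Rightarrow> bool" where
  "closedM M \<longleftrightarrow> 0 \<in> M \<and> 1 \<in> M \<and> (\<forall>x\<in>M. \<forall>y\<in>M. x + y \<in> M \<and> x * y \<in> M)"

lemma closedM_sum:
  assumes "closedM M" "\<And>i. i \<in> I \<Longrightarrow> f i \<in> M"
  shows "sum f I \<in> M"
  using assms(2)
proof (induction I rule: infinite_finite_induct)
  case (insert i I)
  then show ?case using assms(1) unfolding closedM_def by simp
qed (use assms(1) in \<open>simp_all add: closedM_def\<close>)

lemma closedM_power:
  assumes "closedM M" "x \<in> M"
  shows "x ^ k \<in> M"
proof (induction k)
  case 0 then show ?case using assms(1) unfolding closedM_def by simp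
next
  case (Suc k) then show ?case using assms unfolding closedM_def by simp
qed

lemma adj_sub:
  assumes "closedM M" "A \<subseteq> M" "z \<in> M"
  shows "adj A z \<subseteq> M"
proof
  fix x assume "x \<in> adj A z"
  then obtain p where p: "p \<in> PA A" "x = poly p z" unfolding adj_def by blast
  have "(\<Sum>i\<le>degree p. coeff p i * z ^ i) \<in> M"
  proof (rule closedM_sum[OF assms(1)])
    fix i
    have "coeff p i \<in> M" using p(1) assms(2) unfolding PA_def by blast
    moreover have "z ^ i \<in> M" by (rule closedM_power[OF assms(1,3)])
    ultimately show "coeff p i * z ^ i \<in> M" using assms(1) unfolding closedM_def by blast
  qed
  then show "x \<in> M" unfolding p(2) poly_altdef .
qed

lemma noeth_adj:
  assumes sA: "sring A" and nA: "noeth A"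
  shows "noeth (adj A z)"
  unfolding noeth_def
proof (intro allI impI)
  fix G assume G: "G \<subseteq> adj A z"
  define ev where "ev p = poly p z" for p :: "'a poly"
  define G' where "G' = {p \<in> PA A. ev p \<in> G}"
  have sP: "sring (PA A)" by (rule sring_PA[OF sA])
  have sB: "sring (adj A z)" by (rule sring_adj[OF sA])
  obtain F' where F': "F' \<subseteq> G'" "finite F'" "G' \<subseteq> lin (PA A) F'"
    using hilbert[OF sA nA, unfolded noeth_def, rule_format, of G'] unfolding G'_def by blast
  define F where "F = ev ` F'"
  have hom: "lin (PA A) F' \<subseteq> {p. ev p \<in> lin (adj A z) F}"
  proof (rule lin_closed[OF sP])
    show "0 \<in> {p. ev p \<in> lin (adj A z) F}" by (simp add: ev_def lin_0)
    show "x + y \<in> {p. ev p \<in> lin (adj A z) F}" if "x \<in> {p. ev p \<in> lin (adj A z) F}"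
      "y \<in> {p. ev p \<in> lin (adj A z) F}" for x y
      using lin_add[OF _ _ sB, of "ev x" F "ev y"] that by (simp add: ev_def)
    show "a * x \<in> {p. ev p \<in> lin (adj A z) F}" if "a \<in> PA A" "x \<in> F'" for a x
    proof -
      have "ev a \<in> adj A z" using that(1) unfolding adj_def ev_def by blast
      moreover have "ev x \<in> lin (adj A z) F" using that(2) unfolding F_def
        by (intro lin_base[OF _ sB]) blast
      ultimately have "ev a * ev x \<in> lin (adj A z) F" by (intro lin_mult[OF _ _ sB])
      then show ?thesis by (simp add: ev_def)
    qed
  qed
  show "\<exists>F\<subseteq>G. finite F \<and> G \<subseteq> lin (adj A z) F"
  proof (intro exI conjI)
    show "F \<subseteq> G" using F'(1) unfolding F_def G'_def by blast
    show "finite F" using F'(2) unfolding F_def by simp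
    show "G \<subseteq> lin (adj A z) F"
    proof
      fix g assume "g \<in> G"
      with G obtain p where p: "p \<in> PA A" "g = ev p" unfolding adj_def ev_def by blast
      then have "p \<in> G'" using \<open>g \<in> G\<close> unfolding G'_def by blast
      then have "p \<in> lin (PA A) F'" using F'(3) by blast
      then show "g \<in> lin (adj A z) F" using hom p(2) by blast
    qed
  qed
qed

lemma noeth_field_image:
  fixes h :: "'b::field \<Rightarrow> 'a::comm_ring_1"
  assumes hom: "\<And>u v. h (u * v) = h u * h v" and h0: "h 0 = 0"
  shows "noeth (range h)"
  unfolding noeth_def
proof (intro allI impI)
  fix G assume G: "G \<subseteq> range h"
  show "\<exists>F\<subseteq>G. finite F \<and> G \<subseteq> lin (range h) F"
  proof (cases "G \<subseteq> {0}")
    case True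
    then show ?thesis using lin_0[of "range h" "{}"] by (intro exI[of _ "{}"]) auto
  next
    case False
    then obtain g0 where g0: "g0 \<in> G" "g0 \<noteq> 0" by blast
    then obtain u0 where u0: "g0 = h u0" using G by blast
    have "u0 \<noteq> 0" using u0 g0(2) h0 by auto
    show ?thesis
    proof (intro exI[of _ "{g0}"] conjI)
      show "{g0} \<subseteq> G" "finite {g0}" using g0 by auto
      show "G \<subseteq> lin (range h) {g0}"
      proof
        fix g assume "g \<in> G"
        then obtain u where u: "g = h u" using G by blast
        have "g = (\<Sum>f\<in>{g0}. h (u / u0) * f)" using u u0 hom[of "u / u0" u0] \<open>u0 \<noteq> 0\<close> by simp
        then show "g \<in> lin (range h) {g0}" unfolding lin_def
          by (intro CollectI exI[of _ "{g0}"] exI[of _ "\<lambda>_. h (u / u0)"]) auto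
      qed
    qed
  qed
qed

fun tower :: "'a::comm_ring_1 set \<Rightarrow> 'a list \<Rightarrow> 'a set" where
  "tower A [] = A"
| "tower A (z # zs) = adj (tower A zs) z"

lemma tower_props:
  assumes "sring A" "noeth A"
  shows "sring (tower A zs) \<and> noeth (tower A zs) \<and> A \<subseteq> tower A zs \<and> set zs \<subseteq> tower A zs"
proof (induction zs)
  case Nil
  then show ?case using assms by simp
next
  case (Cons z zs)
  then have s: "sring (tower A zs)" and n: "noeth (tower A zs)" by blast+
  have sub: "tower A zs \<subseteq> adj (tower A zs) z" "z \<in> adj (tower A zs) z"
    using adj_base[OF s] by blast+
  show ?case using Cons sub sring_adj[OF s] noeth_adj[OF s n] by auto
qed

lemma tower_sub:
  assumes "closedM M" "A \<subseteq> M" "set zs \<subseteq> M"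
  shows "tower A zs \<subseteq> M"
  using assms(3)
proof (induction zs)
  case Nil then show ?case using assms(2) by simp
next
  case (Cons z zs)
  then show ?case using adj_sub[OF assms(1)] by simp
qed

lemma sring_prod:
  assumes "sring A" "\<And>i. i \<in> I \<Longrightarrow> f i \<in> A"
  shows "prod f I \<in> A"
  using assms(2)
proof (induction I rule: infinite_finite_induct)
  case (insert i I)
  then show ?case by (simp add: sringD(4)[OF assms(1)])
qed (simp_all add: sringD(2)[OF assms(1)])



lemma lookup_single0_mult:
  fixes c :: "'b::comm_semiring_1"
  shows "Poly_Mapping.lookup (Poly_Mapping.single (0::'a::comm_monoid_add) c * Q) a
         = c * Poly_Mapping.lookup Q a"
  by (simp add: lookup_mult lookup_single when_mult mult_when Sum_any_right_distrib)

lemma pm_decomp: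
  fixes f :: "'a \<Rightarrow>\<^sub>0 'b::comm_monoid_add"
  shows "f = (\<Sum>k\<in>Poly_Mapping.keys f. Poly_Mapping.single k (Poly_Mapping.lookup f k))"
proof (rule poly_mapping_eqI)
  fix a
  have "Poly_Mapping.lookup (\<Sum>k\<in>Poly_Mapping.keys f. Poly_Mapping.single k (Poly_Mapping.lookup f k)) a
      = (\<Sum>k\<in>Poly_Mapping.keys f. if k = a then Poly_Mapping.lookup f k else 0)"
    by (simp add: lookup_sum lookup_single when_def)
  also have "\<dots> = Poly_Mapping.lookup f a"
    by (simp add: sum.delta' in_keys_iff)
  finally show "Poly_Mapping.lookup f a = Poly_Mapping.lookup (\<Sum>k\<in>Poly_Mapping.keys f. Poly_Mapping.single k (Poly_Mapping.lookup f k)) a" by simp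
qed

lemma single_sum_one:
  "finite J \<Longrightarrow> Poly_Mapping.single (\<Sum>j\<in>J. g j) (1::'b::comm_semiring_1)
     = (\<Prod>j\<in>J. Poly_Mapping.single (g j) 1 :: ('a::comm_monoid_add \<Rightarrow>\<^sub>0 'b))"
proof (induction J rule: finite_induct)
  case empty then show ?case by simp
next
  case (insert j J)
  then show ?case by (simp add: insert(3)[symmetric] mult_single)
qed

inductive_set PF :: "(real^'m::finite \<Rightarrow> complex) set" where
  PF_const: "(\<lambda>_. c) \<in> PF"
| PF_coord: "(\<lambda>x. complex_of_real (x $ i)) \<in> PF"
| PF_add: "f \<in> PF \<Longrightarrow> g \<in> PF \<Longrightarrow> (\<lambda>x. f x + g x) \<in> PF"
| PF_mult: "f \<in> PF \<Longrightarrow> g \<in> PF \<Longrightarrow> (\<lambda>x. f x * g x) \<in> PF"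

lemma PF_sum: "(\<And>a. a \<in> A \<Longrightarrow> F a \<in> PF) \<Longrightarrow> (\<lambda>x. \<Sum>a\<in>A. F a x) \<in> PF"
proof (induction A rule: infinite_finite_induct)
  case (infinite A) then show ?case using PF_const[of 0] by simp
next
  case empty then show ?case using PF_const[of 0] by simp
next
  case (insert a A) then show ?case using PF_add[of "F a" "\<lambda>x. \<Sum>a\<in>A. F a x"] by simp
qed

lemma PF_prod: "(\<And>a. a \<in> A \<Longrightarrow> F a \<in> PF) \<Longrightarrow> (\<lambda>x. \<Prod>a\<in>A. F a x) \<in> PF"
proof (induction A rule: infinite_finite_induct)
  case (infinite A) then show ?case using PF_const[of 1] by simp
next
  case empty then show ?case using PF_const[of 1] by simp
next
  case (insert a A) then show ?case using PF_mult[of "F a" "\<lambda>x. \<Prod>a\<in>A. F a x"] by simp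
qed

lemma PF_power: "f \<in> PF \<Longrightarrow> (\<lambda>x. f x ^ k) \<in> PF"
proof (induction k)
  case 0 then show ?case using PF_const[of 1] by simp
next
  case (Suc k) then show ?case using PF_mult[of f "\<lambda>x. f x ^ k"] by simp
qed

lemma polyfun_PF: "polyfun q \<in> PF"
proof -
  have "polyfun q = (\<lambda>x. \<Sum>a\<in>Poly_Mapping.keys q. Poly_Mapping.lookup q a *
      (\<Prod>i\<in>UNIV. (complex_of_real (x $ i)) ^ Poly_Mapping.lookup a i))"
    by (rule ext) (simp add: polyfun_def)
  also have "\<dots> \<in> PF"
    by (intro PF_sum PF_mult PF_const PF_prod PF_power PF_coord)
  finally show ?thesis .
qed

lemma PF_cont: "f \<in> PF \<Longrightarrow> continuous_on UNIV f"
  by (induction rule: PF.induct) (auto intro!: continuous_intros)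

lemma single_in_CS:
  assumes "Poly_Mapping.keys a \<subseteq> {..<n}" "continuous_on S \<phi>" "\<And>x. x \<notin> S \<Longrightarrow> \<phi> x = 0"
  shows "Poly_Mapping.single a \<phi> \<in> CS_polys S n"
  unfolding CS_polys_def cont_fun_on_def
proof (intro CollectI conjI allI ballI impI)
  fix \<alpha> assume "\<alpha> \<in> Poly_Mapping.keys (Poly_Mapping.single a \<phi>)"
  then have "\<alpha> = a" by (metis empty_iff insert_iff keys_single)
  then show "Poly_Mapping.keys \<alpha> \<subseteq> {..<n}" using assms(1) by simp
next
  fix \<alpha>
  show "continuous_on S (Poly_Mapping.lookup (Poly_Mapping.single a \<phi>) \<alpha>)"
    using assms(2) by (cases "a = \<alpha>") (simp_all add: lookup_single)
  fix x assume "x \<notin> S"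
  then show "Poly_Mapping.lookup (Poly_Mapping.single a \<phi>) \<alpha> x = 0"
    using assms(3) by (cases "a = \<alpha>") (simp_all add: lookup_single)
qed

definition cst :: "complex \<Rightarrow> ('m::finite) cpoly" where
  "cst c = Poly_Mapping.single 0 (\<lambda>_. c)"

definition Xv :: "nat \<Rightarrow> ('m::finite) cpoly" where
  "Xv j = Poly_Mapping.single (Poly_Mapping.single j 1) 1"

definition Yv :: "'m::finite \<Rightarrow> 'm cpoly" where
  "Yv i = Poly_Mapping.single 0 (\<lambda>x. complex_of_real (x $ i))"

definition zsl :: "nat \<Rightarrow> ('m::finite) cpoly list" where
  "zsl n = map Xv [0..<n] @ map Yv (SOME l. set l = (UNIV :: 'm set))"

definition TW :: "nat \<Rightarrow> ('m::finite) cpoly set" where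
  "TW n = tower (range cst) (zsl n)"

lemma set_zsl: "set (zsl n :: ('m::finite) cpoly list) = Xv ` {..<n} \<union> range (Yv :: 'm \<Rightarrow> 'm cpoly)"
proof -
  have "\<exists>l. set l = (UNIV :: 'm set)" using finite_list[of "UNIV :: 'm set"] by simp
  then have "set (SOME l. set l = (UNIV :: 'm set)) = UNIV" by (rule someI_ex)
  then show ?thesis unfolding zsl_def by auto
qed

lemma cst_add: "cst (a + b) = cst a + cst b"
  unfolding cst_def by (simp add: single_add[symmetric] plus_fun_def)

lemma cst_mult: "cst (a * b) = cst a * cst b"
  unfolding cst_def by (simp add: mult_single times_fun_def)

lemma cst_uminus: "cst (- a) = - cst a"
  unfolding cst_def by (simp add: single_uminus[symmetric] fun_Compl_def)

lemma cst_0: "cst 0 = 0" unfolding cst_def by (simp add: zero_fun_def[symmetric])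

lemma cst_1: "cst 1 = 1"
proof -
  have "(\<lambda>_::real^'a. 1::complex) = 1" by (rule ext) simp
  then show ?thesis unfolding cst_def by simp
qed

lemma sring_cst: "sring (range (cst :: complex \<Rightarrow> ('a::finite) cpoly))"
  unfolding sring_def
proof (intro conjI ballI)
  show "0 \<in> range cst" using cst_0 by (metis rangeI)
  show "1 \<in> range cst" using cst_1 by (metis rangeI)
  fix x y :: "'a::finite cpoly" assume "x \<in> range cst" "y \<in> range cst"
  then obtain a b where ab: "x = cst a" "y = cst b" by blast
  show "x + y \<in> range cst" unfolding ab cst_add[symmetric] by (rule rangeI)
  show "x * y \<in> range cst" unfolding ab cst_mult[symmetric] by (rule rangeI)
  show "- x \<in> range cst" unfolding ab cst_uminus[symmetric] by (rule rangeI)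
qed

lemma noeth_cst: "noeth (range (cst :: complex \<Rightarrow> ('a::finite) cpoly))"
  by (rule noeth_field_image) (simp_all add: cst_mult cst_0)

lemma TW_props:
  "sring (TW n :: ('a::finite) cpoly set) \<and> noeth (TW n :: 'a cpoly set) \<and>
   range cst \<subseteq> (TW n :: 'a cpoly set) \<and> set (zsl n) \<subseteq> (TW n :: 'a cpoly set)"
  unfolding TW_def using tower_props[OF sring_cst noeth_cst, of "zsl n"] by simp

lemma TW_sub:
  assumes "closedM M" "range cst \<subseteq> M" "\<And>j. j < n \<Longrightarrow> Xv j \<in> M" "\<And>i. Yv i \<in> M"
  shows "TW n \<subseteq> M"
  unfolding TW_def using assms by (intro tower_sub) (auto simp: set_zsl)

lemma PF_TW:
  fixes \<phi> :: "real^'m::finite \<Rightarrow> complex"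
  shows "\<phi> \<in> PF \<Longrightarrow> Poly_Mapping.single 0 \<phi> \<in> TW n"
proof (induction rule: PF.induct)
  case (PF_const c)
  have "cst c \<in> range cst" by (rule rangeI)
  then have "cst c \<in> TW n" using TW_props[of n] by (meson subsetD)
  then show ?case unfolding cst_def .
next
  case (PF_coord i)
  have "Yv i \<in> set (zsl n)" unfolding set_zsl by blast
  then have "Yv i \<in> TW n" using TW_props[of n] by (meson subsetD)
  then show ?case unfolding Yv_def .
next
  case (PF_add f g)
  have "Poly_Mapping.single 0 (\<lambda>x. f x + g x) = Poly_Mapping.single 0 f + Poly_Mapping.single 0 g"
    by (simp add: single_add[symmetric] plus_fun_def)
  moreover have "sring (TW n :: 'm cpoly set)" using TW_props by blast
  ultimately show ?case using sringD(3)[of "TW n :: 'm cpoly set"] PF_add.IH by metis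
next
  case (PF_mult f g)
  have "Poly_Mapping.single 0 (\<lambda>x. f x * g x) = Poly_Mapping.single 0 f * Poly_Mapping.single 0 g"
    by (simp add: mult_single times_fun_def)
  moreover have "sring (TW n :: 'm cpoly set)" using TW_props by blast
  ultimately show ?case using sringD(4)[of "TW n :: 'm cpoly set"] PF_mult.IH by metis
qed

lemma monomial_TW:
  assumes "Poly_Mapping.keys \<alpha> \<subseteq> {..<n}"
  shows "(Poly_Mapping.single \<alpha> 1 :: ('m::finite) cpoly) \<in> TW n"
proof -
  have s: "sring (TW n :: 'm cpoly set)" using TW_props by blast
  have pw: "(Poly_Mapping.single (Poly_Mapping.single j k) 1 :: 'm cpoly) = Xv j ^ k" for j k
  proof (induction k)
    case 0 then show ?case using cst_1 unfolding cst_def by simp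
  next
    case (Suc k)
    have e1: "Poly_Mapping.single j (Suc k) = Poly_Mapping.single j (1::nat) + Poly_Mapping.single j k"
      by (metis plus_1_eq_Suc single_add)
    have "(Poly_Mapping.single (Poly_Mapping.single j (Suc k)) 1 :: 'm cpoly)
        = Poly_Mapping.single (Poly_Mapping.single j 1 + Poly_Mapping.single j k) (1 * 1)"
      by (simp only: e1 mult_1_left)
    also have "\<dots> = Xv j * Poly_Mapping.single (Poly_Mapping.single j k) 1"
      unfolding Xv_def by (rule mult_single[symmetric])
    also have "\<dots> = Xv j * Xv j ^ k" by (simp only: Suc.IH)
    also have "\<dots> = Xv j ^ Suc k" by (simp only: power_Suc)
    finally show ?case .
  qed
  have "(Poly_Mapping.single \<alpha> 1 :: 'm cpoly) =
      (\<Prod>j\<in>Poly_Mapping.keys \<alpha>. Poly_Mapping.single (Poly_Mapping.single j (Poly_Mapping.lookup \<alpha> j)) 1)"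
    by (subst pm_decomp[of \<alpha>]) (rule single_sum_one, simp)
  also have "\<dots> \<in> TW n"
  proof (rule sring_prod[OF s])
    fix j assume "j \<in> Poly_Mapping.keys \<alpha>"
    then have "j < n" using assms by auto
    then have "Xv j \<in> set (zsl n)" unfolding set_zsl by blast
    then have "Xv j \<in> TW n" using TW_props[of n] by (meson subsetD)
    then show "(Poly_Mapping.single (Poly_Mapping.single j (Poly_Mapping.lookup \<alpha> j)) 1 :: 'm cpoly) \<in> TW n"
      unfolding pw by (rule sring_power[OF s])
  qed
  finally show ?thesis .
qed



lemma clear_denoms:
  fixes P :: "('m::finite) cpoly"
  assumes "P \<in> RS_polys S n"
  shows "\<exists>P'' w v. P'' \<in> TW n \<and> w \<in> CS_polys S n \<and> v \<in> CS_polys S n \<and> P = w * P'' \<and>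
     Poly_Mapping.single 0 (\<lambda>x. if x \<in> S then 1 else 0) * P'' = v * P"
proof -
  have PC: "P \<in> CS_polys S n" and reg: "\<forall>\<alpha>. regular_fun_on S (Poly_Mapping.lookup P \<alpha>)"
    using assms unfolding RS_polys_def by blast+
  have "\<forall>\<alpha>. \<exists>p q. (\<forall>x\<in>S. polyfun q x \<noteq> 0) \<and>
      (\<forall>x. Poly_Mapping.lookup P \<alpha> x = (if x \<in> S then polyfun p x / polyfun q x else 0))"
    using reg unfolding regular_fun_on_def by blast
  then obtain pp qq where pq: "\<And>\<alpha>. (\<forall>x\<in>S. polyfun (qq \<alpha>) x \<noteq> 0)"
    "\<And>\<alpha> x. Poly_Mapping.lookup P \<alpha> x = (if x \<in> S then polyfun (pp \<alpha>) x / polyfun (qq \<alpha>) x else 0)"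
    by metis
  define K where "K = Poly_Mapping.keys P"
  have finK: "finite K" unfolding K_def by simp
  define D where "D x = (\<Prod>\<alpha>\<in>K. polyfun (qq \<alpha>) x)" for x
  define num where "num \<alpha> = (\<lambda>x. polyfun (pp \<alpha>) x * (\<Prod>\<beta>\<in>K - {\<alpha>}. polyfun (qq \<beta>) x))" for \<alpha>
  have DnZ: "D x \<noteq> 0" if "x \<in> S" for x
    unfolding D_def using finK pq(1) that by (simp add: prod_zero_iff)
  have Dsplit: "D x = polyfun (qq \<alpha>) x * (\<Prod>\<beta>\<in>K - {\<alpha>}. polyfun (qq \<beta>) x)" if "\<alpha> \<in> K" for \<alpha> x
    unfolding D_def using finK that by (simp add: prod.remove)
  define P'' where "P'' = (\<Sum>\<alpha>\<in>K. Poly_Mapping.single \<alpha> (num \<alpha>))"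
  have lP'': "Poly_Mapping.lookup P'' \<beta> = (if \<beta> \<in> K then num \<beta> else 0)" for \<beta>
  proof -
    have "Poly_Mapping.lookup P'' \<beta> = (\<Sum>\<alpha>\<in>K. if \<alpha> = \<beta> then num \<alpha> else 0)"
      unfolding P''_def by (simp add: lookup_sum lookup_single when_def)
    also have "\<dots> = (if \<beta> \<in> K then num \<beta> else 0)" using finK by (simp add: sum.delta')
    finally show ?thesis .
  qed
  have lP: "Poly_Mapping.lookup P \<beta> = 0" if "\<beta> \<notin> K" for \<beta>
    using that unfolding K_def by (simp add: in_keys_iff)
  define wf where "wf x = (if x \<in> S then 1 / D x else 0)" for x
  define vf where "vf x = (if x \<in> S then D x else 0)" for x
  define w :: "'m cpoly" where "w = Poly_Mapping.single 0 wf"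
  define v :: "'m cpoly" where "v = Poly_Mapping.single 0 vf"
  define e :: "'m cpoly" where "e = Poly_Mapping.single 0 (\<lambda>x. if x \<in> S then 1 else 0)"
  have eq1: "P = w * P''"
  proof (rule poly_mapping_eqI)
    fix \<beta>
    show "Poly_Mapping.lookup P \<beta> = Poly_Mapping.lookup (w * P'') \<beta>"
      unfolding w_def lookup_single0_mult lP''
    proof (cases "\<beta> \<in> K")
      case True
      show "Poly_Mapping.lookup P \<beta> = wf * (if \<beta> \<in> K then num \<beta> else 0)"
      proof (rule ext)
        fix x
        show "Poly_Mapping.lookup P \<beta> x = (wf * (if \<beta> \<in> K then num \<beta> else 0)) x"
        proof (cases "x \<in> S")
          case True
          have "polyfun (qq \<beta>) x \<noteq> 0" using pq(1) True by blast
          moreover have "(\<Prod>\<beta>\<in>K - {\<beta>}. polyfun (qq \<beta>) x) \<noteq> 0"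
            using DnZ[OF True] Dsplit[OF \<open>\<beta> \<in> K\<close>, of x] by auto
          ultimately show ?thesis using \<open>\<beta> \<in> K\<close> True
            by (simp add: pq(2) wf_def num_def Dsplit[OF \<open>\<beta> \<in> K\<close>] field_simps)
        next
          case False
          then show ?thesis by (simp add: pq(2) wf_def)
        qed
      qed
    next
      case False
      then show "Poly_Mapping.lookup P \<beta> = wf * (if \<beta> \<in> K then num \<beta> else 0)"
        using lP by simp
    qed
  qed
  have eq2: "e * P'' = v * P"
  proof (rule poly_mapping_eqI)
    fix \<beta>
    show "Poly_Mapping.lookup (e * P'') \<beta> = Poly_Mapping.lookup (v * P) \<beta>"
      unfolding e_def v_def lookup_single0_mult lP''
    proof (cases "\<beta> \<in> K")
      case True
      show "(\<lambda>x. if x \<in> S then 1 else 0) * (if \<beta> \<in> K then num \<beta> else 0) = vf * Poly_Mapping.lookup P \<beta>"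
      proof (rule ext)
        fix x
        show "((\<lambda>x. if x \<in> S then 1 else 0) * (if \<beta> \<in> K then num \<beta> else 0)) x = (vf * Poly_Mapping.lookup P \<beta>) x"
        proof (cases "x \<in> S")
          case True
          have "polyfun (qq \<beta>) x \<noteq> 0" using pq(1) True by blast
          then show ?thesis using \<open>\<beta> \<in> K\<close> True
            by (simp add: pq(2) vf_def num_def Dsplit[OF \<open>\<beta> \<in> K\<close>] field_simps)
        next
          case False
          then show ?thesis by (simp add: pq(2) vf_def)
        qed
      qed
    next
      case False
      then show "(\<lambda>x. if x \<in> S then 1 else 0) * (if \<beta> \<in> K then num \<beta> else 0) = vf * Poly_Mapping.lookup P \<beta>"
        using lP by simp
    qed
  qed
  have Dcont: "continuous_on UNIV D"
  proof -
    have "D \<in> PF" unfolding D_def by (intro PF_prod polyfun_PF)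
    then show ?thesis by (rule PF_cont)
  qed
  have wC: "w \<in> CS_polys S n" unfolding w_def
  proof (rule single_in_CS)
    show "continuous_on S wf"
    proof -
      have "continuous_on S (\<lambda>x. 1 / D x)"
        using continuous_on_subset[OF Dcont] DnZ by (intro continuous_intros) auto
      then show ?thesis by (rule continuous_on_cong[THEN iffD1, rotated 2]) (auto simp: wf_def)
    qed
  qed (auto simp: wf_def)
  have vC: "v \<in> CS_polys S n" unfolding v_def
  proof (rule single_in_CS)
    show "continuous_on S vf"
      using continuous_on_subset[OF Dcont]
      by (rule continuous_on_cong[THEN iffD1, rotated 2]) (auto simp: vf_def)
  qed (auto simp: vf_def)
  have P''TW: "P'' \<in> TW n"
  proof -
    have s: "sring (TW n :: 'm cpoly set)" using TW_props by blast
    show ?thesis unfolding P''_def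
    proof (rule sring_sum[OF s])
      fix \<alpha> assume a: "\<alpha> \<in> K"
      have "Poly_Mapping.keys \<alpha> \<subseteq> {..<n}" using PC a unfolding CS_polys_def K_def by blast
      then have m: "(Poly_Mapping.single \<alpha> 1 :: 'm cpoly) \<in> TW n" by (rule monomial_TW)
      have "num \<alpha> \<in> PF" unfolding num_def by (intro PF_mult polyfun_PF PF_prod)
      then have c: "(Poly_Mapping.single 0 (num \<alpha>) :: 'm cpoly) \<in> TW n" by (rule PF_TW)
      have "(Poly_Mapping.single \<alpha> (num \<alpha>) :: 'm cpoly) = Poly_Mapping.single \<alpha> 1 * Poly_Mapping.single 0 (num \<alpha>)"
        by (simp add: mult_single)
      then show "Poly_Mapping.single \<alpha> (num \<alpha>) \<in> TW n" using sringD(4)[OF s m c] by simp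
    qed
  qed
  show ?thesis using P''TW wC vC eq1 eq2 unfolding e_def by blast
qed

lemma single0_e_CS:
  assumes "continuous_on UNIV \<phi>" "Poly_Mapping.keys a \<subseteq> {..<n}"
  shows "Poly_Mapping.single a \<phi> * Poly_Mapping.single 0 (\<lambda>x. if x \<in> S then 1 else 0) \<in> CS_polys S n"
proof -
  have "Poly_Mapping.single a \<phi> * Poly_Mapping.single 0 (\<lambda>x. if x \<in> S then 1 else 0)
      = Poly_Mapping.single (a + 0) (\<phi> * (\<lambda>x. if x \<in> S then 1 else 0))"
    by (rule mult_single)
  also have "\<dots> = Poly_Mapping.single a (\<lambda>x. if x \<in> S then \<phi> x else 0)"
    by (rule arg_cong2[where f="Poly_Mapping.single"]) (auto simp: fun_eq_iff)
  also have "\<dots> \<in> CS_polys S n"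
  proof (rule single_in_CS[OF assms(2)])
    show "continuous_on S (\<lambda>x. if x \<in> S then \<phi> x else 0)"
      using continuous_on_subset[OF assms(1), of S]
      by (rule continuous_on_cong[THEN iffD1, rotated 2]) auto
  qed auto
  finally show ?thesis .
qed

theorem mainTheorem5:
  fixes S :: "(real^'m::finite) set" and n :: nat and I :: "'m cpoly set"
  assumes "condensed S"
    and "condensed_ideal S n I"
  shows "\<exists>F. finite F \<and> F \<subseteq> I \<and> I = genideal (CS_poly_ring S n) F"
proof -
  define R where "R = CS_poly_ring S n"
  obtain G where idI: "ideal I R" and G: "G \<subseteq> RS_polys S n" and IG: "I = genideal R G"
    using assms(2) unfolding condensed_ideal_def R_def by blast
  have ringR: "ring R" using idI unfolding ideal_def by blast
  interpret R: ring R by (rule ringR)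
  define e :: "'m cpoly" where "e = Poly_Mapping.single 0 (\<lambda>x. if x \<in> S then 1 else 0)"
  have carr: "carrier R = CS_polys S n" unfolding R_def CS_poly_ring_def by simp
  have mul: "\<And>a b. a \<otimes>\<^bsub>R\<^esub> b = a * b" unfolding R_def CS_poly_ring_def by simp
  have add: "\<And>a b. a \<oplus>\<^bsub>R\<^esub> b = a + b" unfolding R_def CS_poly_ring_def by simp
  have one: "\<one>\<^bsub>R\<^esub> = e" unfolding R_def CS_poly_ring_def e_def by simp
  have zero: "\<zero>\<^bsub>R\<^esub> = 0" unfolding R_def CS_poly_ring_def by simp
  have eQ: "e * Q = Q" if "Q \<in> CS_polys S n" for Q
    using R.l_one[of Q] that unfolding carr mul one by simp
  have GC: "G \<subseteq> carrier R" using G unfolding carr RS_polys_def by blast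
  have "\<forall>P\<in>G. \<exists>P'' w v. P'' \<in> TW n \<and> w \<in> CS_polys S n \<and> v \<in> CS_polys S n \<and> P = w * P'' \<and>
     e * P'' = v * P"
    using G clear_denoms unfolding e_def by blast
  then obtain pp ww vv where dat: "\<And>P. P \<in> G \<Longrightarrow> pp P \<in> TW n \<and> ww P \<in> CS_polys S n \<and>
      vv P \<in> CS_polys S n \<and> P = ww P * pp P \<and> e * pp P = vv P * P"
    by metis
  have sTW: "sring (TW n :: 'm cpoly set)" and nTW: "noeth (TW n :: 'm cpoly set)"
    using TW_props by blast+
  have ppG: "pp ` G \<subseteq> TW n" using dat by blast
  obtain F'' where F'': "F'' \<subseteq> pp ` G" "finite F''" "pp ` G \<subseteq> lin (TW n) F''"
    using nTW[unfolded noeth_def, rule_format, OF ppG] by blast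
  define Qf where "Qf f = (SOME Q. Q \<in> G \<and> pp Q = f)" for f
  have Qf: "Qf f \<in> G \<and> pp (Qf f) = f" if "f \<in> F''" for f
  proof -
    have "\<exists>Q. Q \<in> G \<and> pp Q = f" using that F''(1) by blast
    then show ?thesis unfolding Qf_def by (rule someI_ex)
  qed
  define F where "F = Qf ` F''"
  have FG: "F \<subseteq> G" unfolding F_def using Qf by blast
  have finF: "finite F" unfolding F_def using F''(2) by simp
  have FC: "F \<subseteq> carrier R" using FG GC by blast
  have GI: "G \<subseteq> I" unfolding IG by (rule ring.genideal_self[OF ringR GC])
  define J where "J = genideal R F"
  have idJ: "ideal J R" unfolding J_def by (rule ring.genideal_ideal[OF ringR FC])
  interpret J: ideal J R by (rule idJ)
  have FJ: "F \<subseteq> J" unfolding J_def by (rule ring.genideal_self[OF ringR FC])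
  have JI: "J \<subseteq> I" unfolding J_def using FG GI by (intro ring.genideal_minimal[OF ringR idI]) blast
  have J0: "0 \<in> J" using J.zero_closed unfolding zero .
  have Jadd: "a + b \<in> J" if "a \<in> J" "b \<in> J" for a b using J.a_closed[OF that] unfolding add .
  have Jmul: "x * a \<in> J" if "a \<in> J" "x \<in> CS_polys S n" for a x
    using J.I_l_closed[OF that(1)] that(2) unfolding carr mul by blast
  have JC: "a \<in> CS_polys S n" if "a \<in> J" for a using J.a_subset that unfolding carr by blast
  define MJ where "MJ = {c. \<forall>Q\<in>J. c * Q \<in> J}"
  have MJe: "z \<in> MJ" if "z * e \<in> CS_polys S n" for z
    unfolding MJ_def
  proof (intro CollectI ballI)
    fix Q assume Q: "Q \<in> J"
    have "z * Q = (z * e) * Q" using eQ[OF JC[OF Q]] by (simp add: mult.assoc)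
    then show "z * Q \<in> J" using Jmul[OF Q that] by simp
  qed
  have cMJ: "closedM MJ" unfolding closedM_def MJ_def
    using J0 Jadd by (auto simp: distrib_right mult.assoc)
  have TWMJ: "TW n \<subseteq> MJ"
  proof (rule TW_sub[OF cMJ])
    show "range cst \<subseteq> MJ"
    proof
      fix x assume "x \<in> range (cst :: complex \<Rightarrow> 'm cpoly)"
      then obtain c where x: "x = cst c" by blast
      show "x \<in> MJ" unfolding x cst_def e_def
        by (rule MJe[unfolded e_def], rule single0_e_CS) auto
    qed
    show "Xv j \<in> MJ" if "j < n" for j
      unfolding Xv_def
      by (rule MJe[unfolded e_def], rule single0_e_CS) (auto simp: that)
    show "Yv i \<in> MJ" for i
      unfolding Yv_def
      by (rule MJe[unfolded e_def], rule single0_e_CS) (auto intro!: continuous_intros)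
  qed
  have GJ: "G \<subseteq> J"
  proof
    fix P assume P: "P \<in> G"
    define MP where "MP = {c. ww P * c \<in> J}"
    have wC: "ww P \<in> CS_polys S n" using dat[OF P] by blast
    have "lin (TW n) F'' \<subseteq> MP"
    proof (rule lin_closed[OF sTW])
      show "0 \<in> MP" unfolding MP_def using J0 by simp
      show "x + y \<in> MP" if "x \<in> MP" "y \<in> MP" for x y
        using Jadd that unfolding MP_def by (simp add: distrib_left)
      show "a * f \<in> MP" if a: "a \<in> TW n" and f: "f \<in> F''" for a f
      proof -
        have Q: "Qf f \<in> G" "pp (Qf f) = f" using Qf[OF f] by blast+
        have "e * pp (Qf f) = vv (Qf f) * Qf f" using dat[OF Q(1)] by (elim conjE)
        then have ef: "e * f = vv (Qf f) * Qf f" unfolding Q(2) .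
        have vC: "vv (Qf f) \<in> CS_polys S n" using dat[OF Q(1)] by blast
        have we: "ww P * e = ww P" using eQ[OF wC] by (simp add: mult.commute)
        have "ww P * (a * f) = a * ((ww P * vv (Qf f)) * Qf f)"
        proof -
          have "ww P * (a * f) = a * ((ww P * e) * f)" by (simp add: we mult.left_commute)
          also have "\<dots> = a * (ww P * (e * f))" by (simp add: mult.assoc)
          finally show ?thesis unfolding ef by (simp add: mult.assoc)
        qed
        moreover have "(ww P * vv (Qf f)) * Qf f \<in> J"
        proof (rule Jmul)
          show "Qf f \<in> J" using FJ Q(1) f unfolding F_def by blast
          show "ww P * vv (Qf f) \<in> CS_polys S n"
            using R.m_closed[of "ww P" "vv (Qf f)"] wC vC unfolding carr mul by blast
        qed
        moreover have "a \<in> MJ" using a TWMJ by blast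
        ultimately show ?thesis unfolding MP_def MJ_def by simp
      qed
    qed
    moreover have "pp P \<in> lin (TW n) F''" using F''(3) P by blast
    ultimately have "ww P * pp P \<in> J" unfolding MP_def by blast
    then show "P \<in> J" using dat[OF P] by simp
  qed
  have IJ: "I \<subseteq> J" unfolding IG by (rule ring.genideal_minimal[OF ringR idJ GJ])
  have "I = J" using IJ JI by blast
  then show ?thesis using finF FG GI unfolding J_def R_def by blast
qed


end
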